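(* For every constant $c>0$ there exist constants $\epsilon>0$ and $c'>0$ such that for every odd $n$, with $\alpha=c\sqrt n$ and the hockey stick function $hs_\alpha(x)=\min\big(\alpha,\frac{2\alpha}{n}\sum_{i=1}^nx_i\big)$ on $\{0,1\}^n$, it holds that $\mathcal D^{\to,U}_{\epsilon}(hs_\alpha^+)\ge c'n$.
   Context: The XOR-function of $f$ is $f^+(x,y)=f(x+y)$ (coordinatewise addition mod 2). Distributional one-way communication complexity under the uniform distribution: $\mathcal D^{\to,U}_\epsilon(f^+)$ is the minimum, over deterministic one-way protocols $\Pi$ in which Alice (holding $x$) sends a single message to Bob (holding $y$) who outputs a real number $\Pi(x,y)$ depending only on the message and $y$, satisfying $\mathbb E_{x,y\sim U(\mathbb F_2^n)}[(\Pi(x,y)-f^+(x,y))^2]\le\epsilon$, of the maximum message length in bits. *)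

theory Defs
  imports Complex_Main
begin

text \<open>Vectors of F_2^n are represented as boolean lists of length n (True = 1).\<close>
definition cube :: "nat \<Rightarrow> bool list set" where
  "cube n = {xs. length xs = n}"

definition xor_vec :: "bool list \<Rightarrow> bool list \<Rightarrow> bool list" where
  "xor_vec x y = map2 (\<lambda>a b. a \<noteq> b) x y"

definition xor_fun :: "(bool list \<Rightarrow> real) \<Rightarrow> bool list \<Rightarrow> bool list \<Rightarrow> real" where
  "xor_fun f = (\<lambda>x y. f (xor_vec x y))"

definition weight :: "bool list \<Rightarrow> nat" where
  "weight x = length (filter id x)"

definition hockey_stick :: "nat \<Rightarrow> real \<Rightarrow> bool list \<Rightarrow> real" where
  "hockey_stick n \<alpha> x = min \<alpha> (2 * \<alpha> / real n * real (weight x))"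

text \<open>Expected squared error under the uniform distribution on F_2^n x F_2^n of the
  deterministic one-way protocol where Alice sends message M x and Bob outputs B (M x) y.\<close>
definition ow_error ::
  "nat \<Rightarrow> (bool list \<Rightarrow> bool list) \<Rightarrow> (bool list \<Rightarrow> bool list \<Rightarrow> real)
     \<Rightarrow> (bool list \<Rightarrow> bool list \<Rightarrow> real) \<Rightarrow> real" where
  "ow_error n M B F =
     (\<Sum>x\<in>cube n. \<Sum>y\<in>cube n. (B (M x) y - F x y)^2) / (2 ^ n * 2 ^ n)"

definition D_oneway_U :: "nat \<Rightarrow> real \<Rightarrow> (bool list \<Rightarrow> bool list \<Rightarrow> real) \<Rightarrow> nat" where
  "D_oneway_U n \<epsilon> F = (LEAST k. \<exists>M B. (\<forall>x\<in>cube n. length (M x) \<le> k) \<and> ow_error n M B F \<le> \<epsilon>)"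

end

theory Submission
  imports Defs
begin


definition chi :: "nat \<Rightarrow> bool list \<Rightarrow> real" where
  "chi i z = (if z ! i then -1 else 1)"

lemma cube_alt: "cube n = {xs. set xs \<subseteq> UNIV \<and> length xs = n}"
  by (simp add: cube_def)

lemma finite_cube[simp]: "finite (cube n)"
  unfolding cube_alt by (rule finite_lists_length_eq) simp

lemma card_cube: "card (cube n) = 2 ^ n"
  unfolding cube_alt by (subst card_lists_length_eq) (simp_all add: card_UNIV_bool)

lemma cube_0: "cube 0 = {[]}"
  by (auto simp: cube_def)

lemma sum_cube_Suc:
  "(\<Sum>z\<in>cube (Suc n). f z) = (\<Sum>u\<in>cube n. f (False # u) + f (True # u))"
proof -
  have eq: "cube (Suc n) = (\<lambda>u. False # u) ` cube n \<union> (\<lambda>u. True # u) ` cube n"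
    by (auto simp: cube_def length_Suc_conv)
  have "(\<Sum>z\<in>cube (Suc n). f z) = (\<Sum>z\<in>(\<lambda>u. False # u) ` cube n. f z) + (\<Sum>z\<in>(\<lambda>u. True # u) ` cube n. f z)"
    unfolding eq by (rule sum.union_disjoint) auto
  also have "\<dots> = (\<Sum>u\<in>cube n. f (False # u)) + (\<Sum>u\<in>cube n. f (True # u))"
    by (simp add: sum.reindex inj_on_def)
  finally show ?thesis by (simp add: sum.distrib)
qed

lemma chi_sq: "chi i z * chi i z = 1"
  by (simp add: chi_def)

lemma chi_Cons_0: "chi 0 (b # u) = (if b then -1 else 1)"
  by (simp add: chi_def)

lemma chi_Cons_Suc: "chi (Suc i) (b # u) = chi i u"
  by (simp add: chi_def)

lemma orth:
  "i < n \<Longrightarrow> j < n \<Longrightarrow> i \<noteq> j \<Longrightarrow> (\<Sum>y\<in>cube n. chi i y * chi j y) = 0"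
proof (induction n arbitrary: i j)
  case 0 then show ?case by simp
next
  case (Suc n)
  show ?case
  proof (cases i)
    case 0
    then obtain j' where "j = Suc j'" using Suc by (cases j) auto
    then show ?thesis using 0 by (simp add: sum_cube_Suc chi_Cons_0 chi_Cons_Suc)
  next
    case (Suc i')
    show ?thesis
    proof (cases j)
      case 0 then show ?thesis using Suc by (simp add: sum_cube_Suc chi_Cons_0 chi_Cons_Suc)
    next
      case (Suc j')
      have "(\<Sum>y\<in>cube n. chi i' y * chi j' y) = 0"
        using Suc.IH[of i' j'] Suc.prems \<open>i = Suc i'\<close> Suc by auto
      then show ?thesis using Suc \<open>i = Suc i'\<close>
        by (simp add: sum_cube_Suc chi_Cons_Suc sum_distrib_left[symmetric])
    qed
  qed
qed

lemma orth_full: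
  "i < n \<Longrightarrow> j < n \<Longrightarrow> (\<Sum>y\<in>cube n. chi i y * chi j y) = (if i = j then 2 ^ n else 0)"
  using orth[of i n j] by (auto simp: chi_sq card_cube)

lemma bessel:
  "(\<Sum>i<n. (\<Sum>y\<in>cube n. h y * chi i y)^2) / 2 ^ n \<le> (\<Sum>y\<in>cube n. (h y)^2)"
proof -
  define c where "c i = (\<Sum>y\<in>cube n. h y * chi i y) / 2 ^ n" for i
  define P where "P y = (\<Sum>i<n. c i * chi i y)" for y
  have hc: "(\<Sum>y\<in>cube n. h y * chi i y) = 2 ^ n * c i" for i
    by (simp add: c_def)
  have 1: "(\<Sum>y\<in>cube n. h y * P y) = 2 ^ n * (\<Sum>i<n. (c i)^2)"
  proof -
    have "(\<Sum>y\<in>cube n. h y * P y) = (\<Sum>i<n. c i * (\<Sum>y\<in>cube n. h y * chi i y))"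
      unfolding P_def by (simp add: sum_distrib_left sum_distrib_right mult_ac sum.swap[of _ "cube n"])
    also have "\<dots> = 2 ^ n * (\<Sum>i<n. (c i)^2)"
      by (simp add: hc sum_distrib_left power2_eq_square mult_ac)
    finally show ?thesis .
  qed
  have 2: "(\<Sum>y\<in>cube n. (P y)^2) = 2 ^ n * (\<Sum>i<n. (c i)^2)"
  proof -
    have "(\<Sum>y\<in>cube n. (P y)^2) = (\<Sum>y\<in>cube n. \<Sum>i<n. \<Sum>j<n. c i * c j * (chi i y * chi j y))"
      unfolding P_def power2_eq_square by (simp add: sum_distrib_left sum_distrib_right mult_ac)
    also have "\<dots> = (\<Sum>i<n. \<Sum>j<n. c i * c j * (\<Sum>y\<in>cube n. chi i y * chi j y))"
      by (simp add: sum_distrib_left sum.swap[of _ "cube n"])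
    also have "\<dots> = (\<Sum>i<n. \<Sum>j<n. c i * c j * (if i = j then 2 ^ n else 0))"
      by (intro sum.cong refl) (simp add: orth_full)
    also have "\<dots> = (\<Sum>i<n. c i * c i * 2 ^ n)"
      by (simp add: if_distrib cong: if_cong)
    finally show ?thesis by (simp add: sum_distrib_left power2_eq_square mult_ac)
  qed
  have "0 \<le> (\<Sum>y\<in>cube n. (h y - P y)^2)" by (simp add: sum_nonneg)
  also have "\<dots> = (\<Sum>y\<in>cube n. (h y)^2) - 2 * (\<Sum>y\<in>cube n. h y * P y) + (\<Sum>y\<in>cube n. (P y)^2)"
    by (simp add: power2_diff sum.distrib sum_subtractf sum_distrib_left mult_ac)
  finally have 3: "2 ^ n * (\<Sum>i<n. (c i)^2) \<le> (\<Sum>y\<in>cube n. (h y)^2)"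
    using 1 2 by simp
  have "(\<Sum>i<n. (\<Sum>y\<in>cube n. h y * chi i y)^2) / 2 ^ n = 2 ^ n * (\<Sum>i<n. (c i)^2)"
    by (simp add: hc power_mult_distrib sum_distrib_left power2_eq_square sum_divide_distrib mult_ac)
  with 3 show ?thesis by simp
qed

lemma length_xor: "length (xor_vec x y) = min (length x) (length y)"
  by (simp add: xor_vec_def)

lemma xor_xor: "length x = length y \<Longrightarrow> xor_vec x (xor_vec x y) = y"
  by (induction x y rule: list_induct2) (auto simp: xor_vec_def)

lemma nth_xor: "i < length x \<Longrightarrow> i < length y \<Longrightarrow> xor_vec x y ! i = (x ! i \<noteq> y ! i)"
  by (simp add: xor_vec_def)

lemma chi_xor: "i < length x \<Longrightarrow> i < length y \<Longrightarrow> chi i (xor_vec x y) = chi i x * chi i y"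
  by (simp add: chi_def nth_xor)

lemma xor_shift:
  assumes "x \<in> cube n" "i < n"
  shows "(\<Sum>y\<in>cube n. g (xor_vec x y) * chi i y) = chi i x * (\<Sum>z\<in>cube n. g z * chi i z)"
proof -
  have "(\<Sum>y\<in>cube n. g (xor_vec x y) * chi i y) = (\<Sum>z\<in>cube n. g z * chi i (xor_vec x z))"
    by (rule sum.reindex_bij_witness[where i="xor_vec x" and j="xor_vec x"])
       (use assms in \<open>auto simp: cube_def xor_xor length_xor\<close>)
  also have "\<dots> = (\<Sum>z\<in>cube n. chi i x * (g z * chi i z))"
    by (intro sum.cong refl) (use assms in \<open>auto simp: cube_def chi_xor\<close>)
  finally show ?thesis by (simp add: sum_distrib_left)
qed



lemma exp_sum_cube:
  "(\<Sum>x\<in>cube n. exp (\<Sum>i<n. v i * chi i x)) = (\<Prod>i<n. exp (v i) + exp (- v i))"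
proof (induction n arbitrary: v)
  case 0 then show ?case by (simp add: cube_0)
next
  case (Suc n)
  have e: "(\<Sum>i<Suc n. v i * chi i (b # u)) = (if b then - v 0 else v 0) + (\<Sum>i<n. v (Suc i) * chi i u)" for b u
    by (subst sum.lessThan_Suc_shift) (simp add: chi_Cons_0 chi_Cons_Suc)
  have "(\<Sum>x\<in>cube (Suc n). exp (\<Sum>i<Suc n. v i * chi i x))
      = (\<Sum>u\<in>cube n. (exp (v 0) + exp (- v 0)) * exp (\<Sum>i<n. v (Suc i) * chi i u))"
    unfolding sum_cube_Suc e
    by (intro sum.cong refl) (simp add: exp_add exp_diff exp_minus distrib_right field_simps)
  also have "\<dots> = (exp (v 0) + exp (- v 0)) * (\<Prod>i<n. exp (v (Suc i)) + exp (- v (Suc i)))"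
    by (subst sum_distrib_left[symmetric]) (simp add: Suc.IH[of "\<lambda>i. v (Suc i)"])
  finally show ?case by (simp only: prod.lessThan_Suc_shift)
qed

lemma cosh_bound_pos:
  fixes t :: real assumes "0 \<le> t" "t \<le> 1"
  shows "exp t + exp (- t) \<le> 2 * exp (t^2)"
proof -
  have a: "exp t \<le> 1 + t + t^2" using exp_bound[OF assms] .
  have b: "1 + t \<le> exp t" by simp
  have c: "0 \<le> 1 - t + t^2" using assms by (simp add: power2_eq_square)
  have "1 \<le> (1 + t) * (1 - t + t^2)"
    using assms by (simp add: algebra_simps power2_eq_square power3_eq_cube)
  also have "\<dots> \<le> exp t * (1 - t + t^2)"
    using b c by (rule mult_right_mono)
  finally have "exp (-t) \<le> 1 - t + t^2"
    by (simp add: exp_minus field_simps)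
  moreover have "1 + t^2 \<le> exp (t^2)" by simp
  ultimately show ?thesis using a by linarith
qed

lemma cosh_bound:
  fixes t :: real assumes "\<bar>t\<bar> \<le> 1"
  shows "exp t + exp (- t) \<le> 2 * exp (t^2)"
proof (cases "t \<ge> 0")
  case True then show ?thesis using cosh_bound_pos assms by simp
next
  case False then show ?thesis using cosh_bound_pos[of "-t"] assms by (simp add: add.commute)
qed

lemma var_lower:
  fixes a :: "'a \<Rightarrow> real" and s :: real
  assumes "finite A" "A \<noteq> {}" "\<And>x. x \<in> A \<Longrightarrow> (a x)^2 = s"
  shows "card A * s - (\<Sum>x\<in>A. a x)^2 / card A \<le> (\<Sum>x\<in>A. (\<beta> - a x)^2)"
proof -
  define K where "K = real (card A)"
  define \<sigma> where "\<sigma> = (\<Sum>x\<in>A. a x)"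
  have K: "K > 0" using assms by (simp add: K_def card_gt_0_iff)
  have "(\<Sum>x\<in>A. (\<beta> - a x)^2) = K * \<beta>^2 - 2 * \<beta> * \<sigma> + K * s"
    using assms(3) by (simp add: power2_diff sum.distrib sum_subtractf sum_distrib_left sum_distrib_right K_def \<sigma>_def mult_ac distrib_left)
  moreover have "0 \<le> (K * \<beta> - \<sigma>)^2 / K" using K by simp
  moreover have "(K * \<beta> - \<sigma>)^2 / K = K * \<beta>^2 - 2 * \<beta> * \<sigma> + \<sigma>^2 / K"
    using K by (simp add: power2_diff field_simps power2_eq_square)
  ultimately have "K * s - \<sigma>^2 / K \<le> (\<Sum>x\<in>A. (\<beta> - a x)^2)" by linarith
  then show ?thesis by (simp add: K_def \<sigma>_def)
qed

lemma entropy: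
  fixes a :: "'m \<Rightarrow> real"
  assumes "finite Ms" "\<And>m. m \<in> Ms \<Longrightarrow> a m > 0" "(\<Sum>m\<in>Ms. a m) = K"
  shows "(\<Sum>m\<in>Ms. a m * ln (K / a m)) \<le> K * ln (card Ms)"
proof (cases "Ms = {}")
  case True then show ?thesis using assms by simp
next
  case False
  define N where "N = real (card Ms)"
  have N: "N > 0" using False assms by (simp add: N_def card_gt_0_iff)
  have K: "K > 0" using assms False by (metis sum_pos)
  have "(\<Sum>m\<in>Ms. a m * ln (K / a m)) - K * ln N = (\<Sum>m\<in>Ms. a m * ln (K / (N * a m)))"
  proof -
    have "(\<Sum>m\<in>Ms. a m * ln (K / (N * a m))) = (\<Sum>m\<in>Ms. a m * ln (K / a m) - a m * ln N)"
      by (intro sum.cong refl) (use assms N K in \<open>simp add: ln_div ln_mult algebra_simps\<close>)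
    also have "\<dots> = (\<Sum>m\<in>Ms. a m * ln (K / a m)) - K * ln N"
      by (simp add: sum_subtractf sum_distrib_right[symmetric] assms(3))
    finally show ?thesis by simp
  qed
  also have "\<dots> \<le> (\<Sum>m\<in>Ms. a m * (K / (N * a m) - 1))"
    by (intro sum_mono mult_left_mono ln_le_minus_one) (use assms N K in \<open>auto intro: less_imp_le\<close>)
  also have "\<dots> = (\<Sum>m\<in>Ms. K / N - a m)"
    apply (intro sum.cong refl)
    subgoal for m using assms(2)[of m] N by (auto simp: field_simps)
    done
  also have "\<dots> = 0" using N by (simp add: sum_subtractf assms(3) N_def)
  finally show ?thesis by (simp add: N_def)
qed



lemma level1:
  assumes A: "A \<subseteq> cube n" "A \<noteq> {}"
  shows "(\<Sum>i<n. (\<Sum>x\<in>A. chi i x)^2) \<le> 4 * (card A)^2 * ln (2 ^ n / card A)"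
proof -
  have finA: "finite A" by (rule finite_subset[OF A(1)]) simp
  define a where "a = real (card A)"
  have apos: "a > 0" using A finA by (simp add: a_def card_gt_0_iff)
  define S where "S i = (\<Sum>x\<in>A. chi i x)" for i
  define T where "T = (\<Sum>i<n. (S i)^2)"
  define v where "v i = S i / (2 * a)" for i
  define L where "L x = (\<Sum>i<n. v i * chi i x)" for x
  define q where "q = T / (2 * a^2)"
  have Sabs: "\<bar>S i\<bar> \<le> a" for i
  proof -
    have "\<bar>S i\<bar> \<le> (\<Sum>x\<in>A. \<bar>chi i x\<bar>)" unfolding S_def by (rule sum_abs)
    also have "\<dots> = (\<Sum>x\<in>A. 1)" by (intro sum.cong refl) (simp add: chi_def)
    also have "\<dots> = a" by (simp add: a_def)
    finally show ?thesis .
  qed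
  have vabs: "\<bar>v i\<bar> \<le> 1" for i
    using Sabs[of i] apos by (simp add: v_def abs_divide)
  have sumL: "(\<Sum>x\<in>A. L x) = T / (2 * a)"
  proof -
    have "(\<Sum>x\<in>A. L x) = (\<Sum>i<n. v i * S i)"
      unfolding L_def S_def by (simp add: sum.swap[of _ A] sum_distrib_left)
    also have "\<dots> = (\<Sum>i<n. (S i)^2 / (2 * a))"
      by (simp add: v_def power2_eq_square)
    also have "\<dots> = T / (2 * a)" by (simp add: T_def sum_divide_distrib)
    finally show ?thesis .
  qed
  have "(\<Sum>x\<in>A. exp q * (1 + (L x - q))) \<le> (\<Sum>x\<in>A. exp (L x))"
  proof (rule sum_mono)
    fix x
    have "1 + (L x - q) \<le> exp (L x - q)" by (rule exp_ge_add_one_self)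
    then have "exp q * (1 + (L x - q)) \<le> exp q * exp (L x - q)" by simp
    then show "exp q * (1 + (L x - q)) \<le> exp (L x)" by (simp add: exp_diff)
  qed
  moreover have "(\<Sum>x\<in>A. exp q * (1 + (L x - q))) = a * exp q"
  proof -
    have "(\<Sum>x\<in>A. exp q * (1 + (L x - q))) = exp q * (a + (\<Sum>x\<in>A. L x) - a * q)"
      by (simp add: sum_distrib_left[symmetric] sum.distrib sum_subtractf a_def)
    also have "\<dots> = a * exp q" using apos by (simp add: sumL q_def power2_eq_square field_simps)
    finally show ?thesis .
  qed
  moreover have "(\<Sum>x\<in>A. exp (L x)) \<le> (\<Sum>x\<in>cube n. exp (L x))"
    by (rule sum_mono2) (use A in auto)
  moreover have "(\<Sum>x\<in>cube n. exp (L x)) = (\<Prod>i<n. exp (v i) + exp (- v i))"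
    unfolding L_def by (rule exp_sum_cube)
  moreover have "(\<Prod>i<n. exp (v i) + exp (- v i)) \<le> (\<Prod>i<n. 2 * exp ((v i)^2))"
    by (rule prod_mono) (use vabs cosh_bound in \<open>auto intro: add_nonneg_nonneg less_imp_le\<close>)
  moreover have "(\<Prod>i<n. 2 * exp ((v i)^2)) = 2 ^ n * exp (T / (4 * a^2))"
  proof -
    have "(\<Prod>i<n. 2 * exp ((v i)^2)) = 2 ^ n * exp (\<Sum>i<n. (v i)^2)"
      by (simp add: prod.distrib exp_sum)
    also have "(\<Sum>i<n. (v i)^2) = T / (4 * a^2)"
      unfolding v_def T_def by (simp add: power_divide sum_divide_distrib power_mult_distrib)
    finally show ?thesis .
  qed
  ultimately have "a * exp q \<le> 2 ^ n * exp (T / (4 * a^2))" by linarith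
  then have "ln (a * exp q) \<le> ln (2 ^ n * exp (T / (4 * a^2)))"
    using apos by simp
  then have "ln a + q \<le> n * ln 2 + T / (4 * a^2)"
    using apos by (simp add: ln_mult ln_realpow)
  moreover have "q - T / (4 * a^2) = T / (4 * a^2)"
    unfolding q_def using apos by (simp add: field_simps power2_eq_square)
  ultimately have "T / (4 * a^2) \<le> n * ln 2 - ln a" by linarith
  also have "n * ln 2 - ln a = ln (2 ^ n / a)"
    using apos by (simp add: ln_div ln_realpow)
  finally have "T \<le> 4 * a^2 * ln (2 ^ n / a)"
    using apos by (simp add: field_simps)
  then show ?thesis by (simp add: T_def S_def a_def)
qed







lemma err_bound:
  fixes M :: "bool list \<Rightarrow> bool list" and B :: "bool list \<Rightarrow> bool list \<Rightarrow> real"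
  assumes G: "\<And>i. i < n \<Longrightarrow> (\<Sum>z\<in>cube n. g z * chi i z) = Gc"
  shows "Gc^2 * (n - 4 * ln (card (M ` cube n))) / 4 ^ n \<le> ow_error n M B (xor_fun g)"
proof -
  define X where "X = cube n"
  define Ms where "Ms = M ` X"
  define Am where "Am m = {x\<in>X. M x = m}" for m
  define \<beta> where "\<beta> m i = (\<Sum>y\<in>X. B m y * chi i y)" for m i
  define S where "S m i = (\<Sum>x\<in>Am m. chi i x)" for m i
  define K :: real where "K = 2 ^ n"
  have finX: "finite X" by (simp add: X_def)
  have finMs: "finite Ms" by (simp add: Ms_def finX)
  have Am_sub: "Am m \<subseteq> cube n" for m by (auto simp: Am_def X_def)
  have Am_ne: "m \<in> Ms \<Longrightarrow> Am m \<noteq> {}" for m by (auto simp: Am_def Ms_def)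
  have finAm: "finite (Am m)" for m using finX by (simp add: Am_def)
  have cardAm: "m \<in> Ms \<Longrightarrow> real (card (Am m)) > 0" for m
    using Am_ne finAm by (simp add: card_gt_0_iff)
  have group: "(\<Sum>x\<in>X. f x) = (\<Sum>m\<in>Ms. \<Sum>x\<in>Am m. f x)" for f :: "bool list \<Rightarrow> real"
    unfolding Ms_def Am_def by (rule sum.image_gen[OF finX])
  have sumcard: "(\<Sum>m\<in>Ms. real (card (Am m))) = K"
  proof -
    have "(\<Sum>m\<in>Ms. real (card (Am m))) = (\<Sum>x\<in>X. 1)" using group[of "\<lambda>_. 1"] by simp
    also have "\<dots> = K" by (simp add: X_def K_def card_cube)
    finally show ?thesis .
  qed
  have step1: "4 ^ n * ow_error n M B (xor_fun g) = (\<Sum>x\<in>X. \<Sum>y\<in>X. (B (M x) y - g (xor_vec x y))^2)"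
    by (simp add: ow_error_def X_def xor_fun_def power_mult_distrib[symmetric])
  have step2: "(\<Sum>i<n. (\<beta> (M x) i - chi i x * Gc)^2) / K \<le> (\<Sum>y\<in>X. (B (M x) y - g (xor_vec x y))^2)"
    if x: "x \<in> X" for x
  proof -
    have "(\<Sum>y\<in>X. (B (M x) y - g (xor_vec x y)) * chi i y) = \<beta> (M x) i - chi i x * Gc" if "i < n" for i
    proof -
      have "(\<Sum>y\<in>X. (B (M x) y - g (xor_vec x y)) * chi i y)
          = \<beta> (M x) i - (\<Sum>y\<in>X. g (xor_vec x y) * chi i y)"
        by (simp add: \<beta>_def left_diff_distrib sum_subtractf)
      also have "(\<Sum>y\<in>X. g (xor_vec x y) * chi i y) = chi i x * Gc"
        using xor_shift[where x=x and n=n and i=i and g=g] x that G[OF that] by (simp add: X_def)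
      finally show ?thesis .
    qed
    then have "(\<Sum>i<n. (\<beta> (M x) i - chi i x * Gc)^2) = (\<Sum>i<n. (\<Sum>y\<in>X. (B (M x) y - g (xor_vec x y)) * chi i y)^2)"
      by (intro sum.cong refl) simp
    then show ?thesis using bessel[where n=n and h="\<lambda>y. B (M x) y - g (xor_vec x y)"] by (simp add: X_def K_def)
  qed
  have step3: "Gc^2 * (card (Am m) - (S m i)^2 / card (Am m)) \<le> (\<Sum>x\<in>Am m. (\<beta> m i - chi i x * Gc)^2)"
    if "m \<in> Ms" for m i
  proof -
    have "card (Am m) * Gc^2 - (\<Sum>x\<in>Am m. chi i x * Gc)^2 / card (Am m) \<le> (\<Sum>x\<in>Am m. (\<beta> m i - chi i x * Gc)^2)"
      by (rule var_lower) (use finAm Am_ne that in \<open>auto simp: power_mult_distrib chi_def\<close>)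
    moreover have "(\<Sum>x\<in>Am m. chi i x * Gc) = S m i * Gc" by (simp add: S_def sum_distrib_right)
    ultimately show ?thesis by (simp add: power_mult_distrib right_diff_distrib mult_ac)
  qed
  have step4: "(\<Sum>i<n. (S m i)^2) \<le> 4 * (card (Am m))^2 * ln (K / card (Am m))" if "m \<in> Ms" for m
    using level1[OF Am_sub Am_ne[OF that]] by (simp add: S_def K_def)
  have "Gc^2 * (n * K - 4 * K * ln (card Ms)) \<le> Gc^2 * (n * K - (\<Sum>m\<in>Ms. 4 * card (Am m) * ln (K / card (Am m))))"
  proof -
    have "(\<Sum>m\<in>Ms. real (card (Am m)) * ln (K / card (Am m))) \<le> K * ln (card Ms)"
      by (rule entropy[OF finMs cardAm sumcard])
    moreover have "(\<Sum>m\<in>Ms. 4 * card (Am m) * ln (K / card (Am m))) = 4 * (\<Sum>m\<in>Ms. real (card (Am m)) * ln (K / card (Am m)))"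
      by (simp add: sum_distrib_left mult_ac)
    ultimately show ?thesis by (intro mult_left_mono) simp_all
  qed
  also have "\<dots> \<le> Gc^2 * (\<Sum>m\<in>Ms. \<Sum>i<n. (card (Am m) - (S m i)^2 / card (Am m)))"
  proof -
    have "(\<Sum>m\<in>Ms. \<Sum>i<n. (card (Am m) - (S m i)^2 / card (Am m)))
        = (\<Sum>m\<in>Ms. n * card (Am m) - (\<Sum>i<n. (S m i)^2) / card (Am m))"
      by (simp add: sum_subtractf sum_divide_distrib)
    also have "\<dots> \<ge> (\<Sum>m\<in>Ms. n * card (Am m) - 4 * card (Am m) * ln (K / card (Am m)))"
    proof (rule sum_mono)
      fix m assume m: "m \<in> Ms"
      have "(\<Sum>i<n. (S m i)^2) / card (Am m) \<le> 4 * (card (Am m))^2 * ln (K / card (Am m)) / card (Am m)"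
        using step4[OF m] cardAm[OF m] by (simp add: divide_right_mono)
      also have "\<dots> = 4 * card (Am m) * ln (K / card (Am m))"
        using cardAm[OF m] by (simp add: power2_eq_square)
      finally show "n * card (Am m) - 4 * card (Am m) * ln (K / card (Am m))
          \<le> n * card (Am m) - (\<Sum>i<n. (S m i)^2) / card (Am m)" by simp
    qed
    also have "(\<Sum>m\<in>Ms. n * card (Am m) - 4 * card (Am m) * ln (K / card (Am m)))
       = n * K - (\<Sum>m\<in>Ms. 4 * card (Am m) * ln (K / card (Am m)))"
      by (simp add: sum_subtractf sum_distrib_left[symmetric] sumcard)
    finally show ?thesis by (intro mult_left_mono) simp_all
  qed
  also have "\<dots> = (\<Sum>i<n. \<Sum>m\<in>Ms. Gc^2 * (card (Am m) - (S m i)^2 / card (Am m)))"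
    by (simp add: sum_distrib_left sum.swap[of _ Ms])
  also have "\<dots> \<le> (\<Sum>i<n. \<Sum>m\<in>Ms. \<Sum>x\<in>Am m. (\<beta> m i - chi i x * Gc)^2)"
    by (intro sum_mono step3)
  also have "\<dots> = (\<Sum>i<n. \<Sum>x\<in>X. (\<beta> (M x) i - chi i x * Gc)^2)"
    apply (rule sum.cong[OF refl])
    subgoal for i unfolding group[of "\<lambda>x. (\<beta> (M x) i - chi i x * Gc)^2"] by (intro sum.cong refl) (simp add: Am_def)
    done
  also have "\<dots> = (\<Sum>x\<in>X. \<Sum>i<n. (\<beta> (M x) i - chi i x * Gc)^2)"
    by (rule sum.swap)
  also have "\<dots> \<le> (\<Sum>x\<in>X. K * (\<Sum>y\<in>X. (B (M x) y - g (xor_vec x y))^2))"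
    by (intro sum_mono) (use step2 in \<open>simp add: K_def field_simps\<close>)
  also have "\<dots> = K * (4 ^ n * ow_error n M B (xor_fun g))"
    by (simp add: step1 sum_distrib_left)
  finally have "Gc^2 * (n * K - 4 * K * ln (card Ms)) \<le> K * (4 ^ n * ow_error n M B (xor_fun g))" .
  then have "K * (Gc^2 * (n - 4 * ln (card Ms))) \<le> K * (4 ^ n * ow_error n M B (xor_fun g))"
    by (simp add: algebra_simps)
  then have "Gc^2 * (n - 4 * ln (card Ms)) \<le> 4 ^ n * ow_error n M B (xor_fun g)"
    by (simp add: K_def)
  then show ?thesis by (simp add: Ms_def X_def field_simps)
qed



lemma weight_upd:
  "i < length xs \<Longrightarrow> weight (xs[i := a]) + (if xs ! i then 1 else 0) = weight xs + (if a then 1 else 0)"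
proof (induction xs arbitrary: i)
  case Nil then show ?case by simp
next
  case (Cons x xs)
  show ?case
  proof (cases i)
    case 0 then show ?thesis by (simp add: weight_def)
  next
    case (Suc j)
    then have "j < length xs" using Cons.prems by simp
    then show ?thesis using Cons.IH[of j] Suc by (auto simp: weight_def split: if_splits)
  qed
qed

definition swp :: "nat \<Rightarrow> bool list \<Rightarrow> bool list" where
  "swp i z = z[0 := z ! i, i := z ! 0]"

lemma swp_len[simp]: "length (swp i z) = length z"
  by (simp add: swp_def)

lemma swp_weight: "i < length z \<Longrightarrow> weight (swp i z) = weight z"
proof (cases "i = 0")
  case True then show ?thesis by (simp add: swp_def)
next
  case False
  assume i: "i < length z"
  then have l0: "0 < length z" by linarith
  have 1: "weight (z[0 := z ! i]) + (if z ! 0 then 1 else 0) = weight z + (if z ! i then 1 else 0)"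
    using weight_upd[OF l0] by simp
  have 2: "weight (z[0 := z ! i, i := z ! 0]) + (if z[0 := z ! i] ! i then 1 else 0) = weight (z[0 := z ! i]) + (if z ! 0 then 1 else 0)"
    using weight_upd[of i "z[0 := z ! i]"] i by simp
  have 3: "z[0 := z ! i] ! i = z ! i" using False by simp
  show ?thesis using 1 2 3 by (simp add: swp_def)
qed

lemma swp_swp: "i < length z \<Longrightarrow> swp i (swp i z) = z"
proof -
  assume i: "i < length z"
  then have l0: "0 < length z" by linarith
  show ?thesis
    by (rule nth_equalityI) (use i l0 in \<open>auto simp: swp_def nth_list_update\<close>)
qed

lemma chi_swp: "i < length z \<Longrightarrow> chi i (swp i z) = chi 0 z"
proof -
  assume i: "i < length z"
  then have l0: "0 < length z" by linarith
  show ?thesis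
    by (cases "i = 0") (use i l0 in \<open>simp_all add: swp_def chi_def nth_list_update\<close>)
qed

lemma chi_swp2: "i < length z \<Longrightarrow> chi 0 (swp i z) = chi i z"
proof -
  assume i: "i < length z"
  then have l0: "0 < length z" by linarith
  show ?thesis
    by (cases "i = 0") (use i l0 in \<open>simp_all add: swp_def chi_def nth_list_update\<close>)
qed

lemma coeff_sym:
  assumes "i < n"
  shows "(\<Sum>z\<in>cube n. H (weight z) * chi i z) = (\<Sum>z\<in>cube n. H (weight z) * chi 0 z)"
  by (rule sum.reindex_bij_witness[where i="swp i" and j="swp i"])
     (use assms in \<open>auto simp: cube_def swp_swp swp_weight chi_swp chi_swp2\<close>)

lemma weight_Cons: "weight (b # u) = weight u + (if b then 1 else 0)"
  by (simp add: weight_def)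

lemma weight_not: "weight (map Not u) + weight u = length u"
  by (induction u) (auto simp: weight_def)

lemma weight_le: "weight u \<le> length u"
  by (simp add: weight_def)

lemma half_count:
  "2 * card {u\<in>cube (2*m). weight u \<le> m} \<ge> 2 ^ (2*m)"
proof -
  define C where "C = cube (2*m)"
  define P where "P = {u\<in>C. weight u \<le> m}"
  define Q where "Q = {u\<in>C. weight u \<ge> m}"
  have finC: "finite C" by (simp add: C_def)
  have "card Q = card P"
  proof -
    have nn: "map Not (map Not u) = u" for u :: "bool list" by (induction u) auto
    have "bij_betw (map Not) Q P"
    proof (rule bij_betw_byWitness[where f'="map Not"])
      show "map Not ` Q \<subseteq> P"
      proof
        fix v assume "v \<in> map Not ` Q"
        then obtain u where u: "u \<in> Q" "v = map Not u" by blast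
        have "weight v + weight u = 2 * m" using weight_not[of u] u by (simp add: Q_def C_def cube_def)
        then show "v \<in> P" using u by (auto simp: P_def Q_def C_def cube_def)
      qed
      show "map Not ` P \<subseteq> Q"
      proof
        fix v assume "v \<in> map Not ` P"
        then obtain u where u: "u \<in> P" "v = map Not u" by blast
        have "weight v + weight u = 2 * m" using weight_not[of u] u by (simp add: P_def C_def cube_def)
        then show "v \<in> Q" using u by (auto simp: P_def Q_def C_def cube_def)
      qed
    qed (simp_all add: comp_def)
    then show ?thesis by (rule bij_betw_same_card)
  qed
  have "C = P \<union> Q" by (auto simp: P_def Q_def)
  then have "card C \<le> card P + card Q"
    by (metis card_Un_le)
  then show ?thesis using \<open>card Q = card P\<close> by (simp add: C_def card_cube P_def)
qed



lemma hs_step: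
  fixes \<alpha> N W :: real
  assumes a: "\<alpha> \<ge> 0" and N: "N > 0" and W: "2 * W + 1 \<le> N"
  shows "min \<alpha> (2 * \<alpha> / N * (W + 1)) \<ge> min \<alpha> (2 * \<alpha> / N * W) + \<alpha> / N"
proof -
  have "\<alpha> * (2 * W + 1) \<le> \<alpha> * N" by (rule mult_left_mono[OF W a])
  then have 1: "2 * \<alpha> / N * W + \<alpha> / N \<le> \<alpha>" using N by (simp add: field_simps)
  have 2: "2 * \<alpha> / N * W + \<alpha> / N \<le> 2 * \<alpha> / N * (W + 1)" using a N by (simp add: field_simps)
  have 3: "min \<alpha> (2 * \<alpha> / N * W) \<le> 2 * \<alpha> / N * W" by simp
  show ?thesis using 1 2 3 by linarith
qed

lemma hs_mono:
  fixes \<alpha> N W :: real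
  assumes a: "\<alpha> \<ge> 0" and N: "N > 0"
  shows "min \<alpha> (2 * \<alpha> / N * (W + 1)) \<ge> min \<alpha> (2 * \<alpha> / N * W)"
proof -
  have "2 * \<alpha> / N * W \<le> 2 * \<alpha> / N * (W + 1)" using a N by (simp add: field_simps)
  then show ?thesis by linarith
qed

lemma G0_bound:
  assumes n: "n = 2 * m + 1" and a: "\<alpha> \<ge> 0"
  shows "\<alpha> * 2 ^ n / (4 * n) \<le> - (\<Sum>z\<in>cube n. hockey_stick n \<alpha> z * chi 0 z)"
proof -
  define H where "H w = min \<alpha> (2 * \<alpha> / real n * real w)" for w :: nat
  have Npos: "real n > 0" using n by simp
  have hsH: "hockey_stick n \<alpha> z = H (weight z)" for z by (simp add: hockey_stick_def H_def)
  have "(\<Sum>z\<in>cube n. hockey_stick n \<alpha> z * chi 0 z) = (\<Sum>u\<in>cube (2*m). H (weight u) - H (weight u + 1))"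
  proof -
    have "(\<Sum>z\<in>cube n. hockey_stick n \<alpha> z * chi 0 z) = (\<Sum>z\<in>cube n. H (weight z) * chi 0 z)"
      by (simp only: hsH)
    also have "\<dots> = (\<Sum>u\<in>cube (2*m). H (weight u) - H (weight u + 1))"
      unfolding n by (simp add: sum_cube_Suc weight_Cons chi_Cons_0)
    finally show ?thesis .
  qed
  then have eq: "- (\<Sum>z\<in>cube n. hockey_stick n \<alpha> z * chi 0 z) = (\<Sum>u\<in>cube (2*m). H (weight u + 1) - H (weight u))"
    by (simp add: sum_negf[symmetric])
  have trm: "(if weight u \<le> m then \<alpha> / n else 0) \<le> H (weight u + 1) - H (weight u)" for u
  proof (cases "weight u \<le> m")
    case True
    have w: "2 * real (weight u) + 1 \<le> real n" using True n by simp
    have h1: "H (weight u + 1) = min \<alpha> (2 * \<alpha> / real n * (real (weight u) + 1))" by (simp add: H_def add.commute)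
    have h2: "H (weight u) = min \<alpha> (2 * \<alpha> / real n * real (weight u))" by (simp add: H_def)
    have i: "(if weight u \<le> m then \<alpha> / n else 0) = \<alpha> / n" using True by simp
    from hs_step[OF a Npos w] show ?thesis unfolding i h1 h2 by linarith
  next
    case False
    have h1: "H (weight u + 1) = min \<alpha> (2 * \<alpha> / real n * (real (weight u) + 1))" by (simp add: H_def add.commute)
    have h2: "H (weight u) = min \<alpha> (2 * \<alpha> / real n * real (weight u))" by (simp add: H_def)
    have i: "(if weight u \<le> m then \<alpha> / n else 0) = 0" using False by simp
    from hs_mono[OF a Npos, of "real (weight u)"] show ?thesis unfolding i h1 h2 by linarith
  qed
  have "(\<Sum>u\<in>cube (2*m). (if weight u \<le> m then \<alpha> / n else 0)) = \<alpha> / n * card {u\<in>cube (2*m). weight u \<le> m}"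
    by (simp add: sum.If_cases Int_def conj_commute)
  moreover have "\<alpha> / n * card {u\<in>cube (2*m). weight u \<le> m} \<ge> \<alpha> / n * (2 ^ (2*m) / 2)"
  proof -
    have "real (2 ^ (2*m)) \<le> real (2 * card {u\<in>cube (2*m). weight u \<le> m})"
      using half_count[of m] by (simp only: of_nat_le_iff)
    then have "2 ^ (2*m) / 2 \<le> real (card {u\<in>cube (2*m). weight u \<le> m})" by simp
    then show ?thesis using a Npos by (intro mult_left_mono) simp_all
  qed
  moreover have "\<alpha> / n * (2 ^ (2*m) / 2) = \<alpha> * 2 ^ n / (4 * n)"
    using n by (simp add: field_simps power_add)
  moreover have "(\<Sum>u\<in>cube (2*m). (if weight u \<le> m then \<alpha> / n else 0)) \<le> (\<Sum>u\<in>cube (2*m). H (weight u + 1) - H (weight u))"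
    by (rule sum_mono) (rule trm)
  ultimately show ?thesis using eq by linarith
qed





lemma geom_nat: "(\<Sum>i\<le>D. (2::nat) ^ i) < 2 ^ Suc D"
  by (induction D) auto

lemma msg_count:
  fixes M :: "bool list \<Rightarrow> bool list"
  assumes "\<forall>x\<in>cube n. length (M x) \<le> D"
  shows "card (M ` cube n) \<le> (\<Sum>i\<le>D. (2::nat) ^ i)"
proof -
  have "M ` cube n \<subseteq> {xs. set xs \<subseteq> UNIV \<and> length xs \<le> D}" using assms by auto
  then have "card (M ` cube n) \<le> card {xs :: bool list. set xs \<subseteq> UNIV \<and> length xs \<le> D}"
    by (rule card_mono[rotated]) (rule finite_lists_length_le, simp)
  also have "\<dots> = (\<Sum>i\<le>D. 2 ^ i)" by (subst card_lists_length_le) (simp_all add: card_UNIV_bool)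
  finally show ?thesis .
qed

theorem mainTheorem19:
  fixes c :: real
  assumes "c > 0"
  shows "\<exists>\<epsilon>>0. \<exists>c'>0. \<forall>n::nat. odd n \<longrightarrow>
           real (D_oneway_U n \<epsilon> (xor_fun (hockey_stick n (c * sqrt (real n))))) \<ge> c' * real n"
proof -
  have main: "3/32 * real n \<le> real (D_oneway_U n (c^2/64) (xor_fun (hockey_stick n (c * sqrt (real n)))))"
    if "odd n" for n :: nat
  proof -
  define m where "m = n div 2"
  have n: "n = 2 * m + 1" using odd_two_times_div_two_succ[OF that] by (simp add: m_def)
  have npos: "real n > 0" using n by simp
  define \<alpha> where "\<alpha> = c * sqrt (real n)"
  define g where "g = hockey_stick n \<alpha>"
  define F where "F = xor_fun g"
  define \<epsilon> :: real where "\<epsilon> = c^2/64"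
  define P where "P k = (\<exists>M B. (\<forall>x\<in>cube n. length (M x) \<le> k) \<and> ow_error n M B F \<le> \<epsilon>)" for k
  have a: "\<alpha> \<ge> 0" using assms by (simp add: \<alpha>_def)
  have \<alpha>sq: "\<alpha>^2 = c^2 * n" using assms by (simp add: \<alpha>_def power_mult_distrib)
  have "P n"
    unfolding P_def
    by (rule exI[of _ id], rule exI[of _ F]) (simp add: ow_error_def cube_def \<epsilon>_def)
  then have PD: "P (D_oneway_U n \<epsilon> F)"
    unfolding D_oneway_U_def P_def[symmetric] by (rule LeastI)
  define D where "D = D_oneway_U n \<epsilon> F"
  obtain M B where len: "\<forall>x\<in>cube n. length (M x) \<le> D" and err: "ow_error n M B F \<le> \<epsilon>"
    using PD unfolding P_def D_def[symmetric] by blast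
  define Gc where "Gc = (\<Sum>z\<in>cube n. g z * chi 0 z)"
  define N where "N = card (M ` cube n)"
  have G: "(\<Sum>z\<in>cube n. g z * chi i z) = Gc" if "i < n" for i
    using coeff_sym[OF that, of "\<lambda>w. min \<alpha> (2 * \<alpha> / real n * real w)"]
    by (simp add: Gc_def g_def hockey_stick_def)
  have eb: "Gc^2 * (n - 4 * ln N) / 4 ^ n \<le> \<epsilon>"
    using err_bound[of n g Gc M B, OF G] err by (simp add: F_def N_def)
  have g0: "\<alpha> * 2 ^ n / (4 * n) \<le> - Gc"
    using G0_bound[OF n a] by (simp add: Gc_def g_def)
  have R: "c^2 / (16 * n) \<le> Gc^2 / 4 ^ n"
  proof -
    have "(\<alpha> * 2 ^ n / (4 * n))^2 \<le> (- Gc)^2"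
      by (rule power_mono[OF g0]) (use a in simp)
    also have "(\<alpha> * 2 ^ n / (4 * n))^2 = c^2 / (16 * n) * 4 ^ n"
    proof -
      have 1: "(\<alpha> * 2 ^ n / (4 * n))^2 = \<alpha>^2 * (2 ^ n * 2 ^ n) / (16 * n^2)"
        by (simp add: power_mult_distrib power_divide power2_eq_square)
      have 2: "(2::real) ^ n * 2 ^ n = 4 ^ n"
        by (simp add: power_mult_distrib[symmetric])
      have 3: "c^2 * n * 4 ^ n / (16 * n^2) = c^2 / (16 * n) * 4 ^ n"
        using npos by (simp add: power2_eq_square)
      show ?thesis unfolding 1 2 \<alpha>sq 3 ..
    qed
    finally show ?thesis by (simp add: field_simps)
  qed
  have lnN: "3 * n / 16 \<le> ln N"
  proof (rule ccontr)
    assume "\<not> ?thesis"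
    then have t: "n - 4 * ln N > n / 4" by simp
    have "c^2/64 = c^2 / (16 * n) * (n / 4)" using npos by simp
    also have "\<dots> < c^2 / (16 * n) * (n - 4 * ln N)"
      by (rule mult_strict_left_mono[OF t]) (use assms npos in simp)
    also have "\<dots> \<le> Gc^2 / 4 ^ n * (n - 4 * ln N)"
      by (rule mult_right_mono[OF R]) (use t npos in linarith)
    also have "\<dots> \<le> \<epsilon>" using eb by simp
    finally show False by (simp add: \<epsilon>_def)
  qed
  have Nle: "N \<le> (\<Sum>i\<le>D. (2::nat) ^ i)" using msg_count[OF len] by (simp add: N_def)
  have "D \<noteq> 0"
  proof
    assume "D = 0"
    then have "N \<le> 1" using Nle by simp
    then have "ln (real N) \<le> 0" by (cases N) simp_all
    with lnN npos show False by simp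
  qed
  have Npos: "real N > 0" using lnN npos by (cases N) simp_all
  have NN: "N \<le> 2 ^ Suc D" using Nle geom_nat[of D] by linarith
  have "real N \<le> 2 ^ Suc D" using NN by (metis of_nat_le_iff of_nat_numeral of_nat_power)
  then have "ln (real N) \<le> ln (2 ^ Suc D)" using Npos by simp
  also have "\<dots> = Suc D * ln 2" by (rule ln_realpow)
  also have "\<dots> \<le> real (Suc D) * 1"
    using ln_le_minus_one[of 2] by (intro mult_left_mono) simp_all
  finally have "3 * n / 16 \<le> real (Suc D)" using lnN by simp
  then show "3/32 * real n \<le> real (D_oneway_U n (c^2/64) (xor_fun (hockey_stick n (c * sqrt (real n)))))"
    using \<open>D \<noteq> 0\<close> by (simp add: D_def F_def g_def \<alpha>_def \<epsilon>_def)
  qed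
  show ?thesis
    by (rule exI[of _ "c^2/64"], rule conjI, use assms in simp, rule exI[of _ "3/32"]) (use main in simp)
qed


end
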